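(* Let $\mathcal{H}_A,\mathcal{H}_B$ be finite-dimensional Hilbert spaces and let $W_{AB}\in\mathcal{W}(\mathcal{H}_A\otimes\mathcal{H}_B)$ be a beyond quantum state. Then there exists a semiquantum game $\mathbb{G}_{sq}$ and a choice of local measurements $M_{AA^o}$, $N_{BB^o}$ such that the expected payoff obtained from $W_{AB}$ with these measurements is strictly negative, whereas for every density operator $\rho_{AB}\in\mathcal{D}(\mathcal{H}_A\otimes\mathcal{H}_B)$ and every choice of local measurements (POVMs on $\mathcal{H}_A\otimes\mathcal{H}_{A^o}$ and on $\mathcal{H}_B\otimes\mathcal{H}_{B^o}$ with outcome sets those of the game) the expected payoff is nonnegative. In short: $\mathcal{I}_{\mathbb{G}_{sq}}(W_{AB})<0$ while $\mathcal{I}_{\mathbb{G}_{sq}}(\rho_{AB})\ge 0$ for all $\rho_{AB}\in\mathcal{D}(\mathcal{H}_A\otimes\mathcal{H}_B)$.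
   Context: A POPT state on $\mathcal{H}_A\otimes\mathcal{H}_B$ is a Hermitian unit-trace operator $W$ with $\operatorname{Tr}[W(P\otimes Q)]\ge0$ for all positive semidefinite $P$ on $\mathcal{H}_A$, $Q$ on $\mathcal{H}_B$; the set of these is $\mathcal{W}(\mathcal{H}_A\otimes\mathcal{H}_B)$. $\mathcal{D}(\mathcal{H}_A\otimes\mathcal{H}_B)$ is the set of density operators. A beyond quantum state is an element of $\mathcal{W}\setminus\mathcal{D}$. A (bipartite) semiquantum game $\mathbb{G}_{sq}$ consists of finite-dimensional Hilbert spaces $\mathcal{H}_{A^o},\mathcal{H}_{B^o}$, finite families of pure states $\{\psi^s_{A^o}\}_{s\in\mathcal{S}_A}$ on $\mathcal{H}_{A^o}$ and $\{\psi^t_{B^o}\}_{t\in\mathcal{S}_B}$ on $\mathcal{H}_{B^o}$ (quantum inputs), finite output sets $\mathcal{O}_A,\mathcal{O}_B$, and a real payoff function $\beta:\mathcal{S}_A\times\mathcal{O}_A\times\mathcal{S}_B\times\mathcal{O}_B\to\mathbb{R}$. Given a (POPT or quantum) state $Z_{AB}$ and POVMs $M_{AA^o}=\{\pi^a_{AA^o}\}_{a\in\mathcal{O}_A}$ on $\mathcal{H}_A\otimes\mathcal{H}_{A^o}$ and $N_{BB^o}=\{\pi^b_{BB^o}\}_{b\in\mathcal{O}_B}$ on $\mathcal{H}_B\otimes\mathcal{H}_{B^o}$, the correlation is $p(a,b|\psi^s,\psi^t)=\operatorname{Tr}[(\pi^a_{AA^o}\otimes\pi^b_{BB^o})(\psi^s_{A^o}\otimes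 Z_{AB}\otimes\psi^t_{B^o})]$ (tensor factors reordered appropriately), and the expected payoff is $\mathcal{I}_{\mathbb{G}_{sq}}(Z_{AB})=\sum_{s,a,t,b}\beta(s,a,t,b)\,p(a,b|\psi^s,\psi^t)$. *)

theory Defs
  imports "Jordan_Normal_Form.Matrix" "Jordan_Normal_Form.Conjugate"
begin

(* Finite-dimensional Hilbert spaces are modelled as C^d; operators as complex d x d
   matrices (Jordan_Normal_Form).  The order on complex numbers is the one of
   HOL-Library.Complex_Order (z \<le> w iff Re z \<le> Re w and Im z = Im w). *)

definition mtrace :: "complex mat \<Rightarrow> complex" where
  "mtrace A = (\<Sum>i<dim_row A. A $$ (i, i))"

definition hermitian :: "nat \<Rightarrow> complex mat \<Rightarrow> bool" where
  "hermitian d A \<longleftrightarrow> A \<in> carrier_mat d d \<and> (\<forall>i<d. \<forall>j<d. A $$ (i, j) = cnj (A $$ (j, i)))"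

definition psd :: "nat \<Rightarrow> complex mat \<Rightarrow> bool" where
  "psd d A \<longleftrightarrow> hermitian d A \<and> (\<forall>v \<in> carrier_vec d. (A *\<^sub>v v) \<bullet>c v \<ge> 0)"

(* Kronecker (tensor) product; index of (i,j) is i * dim2 + j *)
definition kron :: "complex mat \<Rightarrow> complex mat \<Rightarrow> complex mat" where
  "kron A B = mat (dim_row A * dim_row B) (dim_col A * dim_col B)
     (\<lambda>(i, j). A $$ (i div dim_row B, j div dim_col B) * B $$ (i mod dim_row B, j mod dim_col B))"

definition density :: "nat \<Rightarrow> complex mat \<Rightarrow> bool" where
  "density d \<rho> \<longleftrightarrow> psd d \<rho> \<and> mtrace \<rho> = 1"

definition popt :: "nat \<Rightarrow> nat \<Rightarrow> complex mat \<Rightarrow> bool" where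
  "popt dA dB W \<longleftrightarrow> hermitian (dA * dB) W \<and> mtrace W = 1 \<and>
     (\<forall>P Q. psd dA P \<longrightarrow> psd dB Q \<longrightarrow> mtrace (W * kron P Q) \<ge> 0)"

definition pure_state :: "nat \<Rightarrow> complex mat \<Rightarrow> bool" where
  "pure_state d P \<longleftrightarrow> (\<exists>v \<in> carrier_vec d. v \<bullet>c v = 1 \<and>
      P = mat d d (\<lambda>(i, j). v $ i * cnj (v $ j)))"

definition povm :: "nat \<Rightarrow> nat \<Rightarrow> (nat \<Rightarrow> complex mat) \<Rightarrow> bool" where
  "povm d n E \<longleftrightarrow> (\<forall>a<n. psd d (E a)) \<and>
     (\<forall>i<d. \<forall>j<d. (\<Sum>a<n. E a $$ (i, j)) = (if i = j then 1 else 0))"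

(* The operator psi_s (on A^o) \<otimes> Z (on A\<otimes>B) \<otimes> psi_t (on B^o), with tensor factors
   reordered to (A \<otimes> A^o) \<otimes> (B \<otimes> B^o). *)
definition joint_state :: "nat \<Rightarrow> nat \<Rightarrow> nat \<Rightarrow> nat \<Rightarrow> complex mat \<Rightarrow> complex mat \<Rightarrow> complex mat \<Rightarrow> complex mat" where
  "joint_state dA dAo dB dBo psiA Z psiB =
     mat (dA * dAo * (dB * dBo)) (dA * dAo * (dB * dBo)) (\<lambda>(k, l).
       let k1 = k div (dB * dBo); k2 = k mod (dB * dBo);
           l1 = l div (dB * dBo); l2 = l mod (dB * dBo);
           a = k1 div dAo; ao = k1 mod dAo; b = k2 div dBo; bo = k2 mod dBo;
           a' = l1 div dAo; ao' = l1 mod dAo; b' = l2 div dBo; bo' = l2 mod dBo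
       in Z $$ (a * dB + b, a' * dB + b') * psiA $$ (ao, ao') * psiB $$ (bo, bo'))"

(* correlation p(a,b | psi^s, psi^t) = Tr[(pi^a \<otimes> pi^b)(psi^s \<otimes> Z \<otimes> psi^t)] (real part;
   it is real for PSD arguments) *)
definition correlation :: "nat \<Rightarrow> nat \<Rightarrow> nat \<Rightarrow> nat \<Rightarrow> complex mat \<Rightarrow> complex mat \<Rightarrow>
    complex mat \<Rightarrow> complex mat \<Rightarrow> complex mat \<Rightarrow> real" where
  "correlation dA dAo dB dBo piA piB psiA Z psiB =
     Re (mtrace (kron piA piB * joint_state dA dAo dB dBo psiA Z psiB))"

(* Semiquantum game: dims dAo, dBo; inputs psiA s (s < nSA), psiB t (t < nSB);
   outputs {..<nOA}, {..<nOB}; payoff beta. *)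
definition semiquantum_game :: "nat \<Rightarrow> nat \<Rightarrow> nat \<Rightarrow> nat \<Rightarrow> (nat \<Rightarrow> complex mat) \<Rightarrow> (nat \<Rightarrow> complex mat) \<Rightarrow> bool" where
  "semiquantum_game dAo dBo nSA nSB psiA psiB \<longleftrightarrow>
     (\<forall>s<nSA. pure_state dAo (psiA s)) \<and> (\<forall>t<nSB. pure_state dBo (psiB t))"

definition payoff :: "nat \<Rightarrow> nat \<Rightarrow> nat \<Rightarrow> nat \<Rightarrow> nat \<Rightarrow> nat \<Rightarrow> nat \<Rightarrow> nat \<Rightarrow>
    (nat \<Rightarrow> complex mat) \<Rightarrow> (nat \<Rightarrow> complex mat) \<Rightarrow> (nat \<Rightarrow> nat \<Rightarrow> nat \<Rightarrow> nat \<Rightarrow> real) \<Rightarrow>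
    (nat \<Rightarrow> complex mat) \<Rightarrow> (nat \<Rightarrow> complex mat) \<Rightarrow> complex mat \<Rightarrow> real" where
  "payoff dA dB dAo dBo nSA nSB nOA nOB psiA psiB beta M N Z =
     (\<Sum>s<nSA. \<Sum>a<nOA. \<Sum>t<nSB. \<Sum>b<nOB.
        beta s a t b * correlation dA dAo dB dBo (M a) (N b) (psiA s) Z (psiB t))"

end

theory Submission
  imports Defs
begin



definition qf :: "nat \<Rightarrow> (nat \<Rightarrow> nat \<Rightarrow> complex) \<Rightarrow> (nat \<Rightarrow> complex) \<Rightarrow> complex" where
  "qf n A x = (\<Sum>i<n. \<Sum>j<n. cnj (x i) * A i j * x j)"

lemma sum_if_eq: "k < (n::nat) \<Longrightarrow> (\<Sum>j<n. (if j = k then f j else 0)) = (f k :: 'a::comm_monoid_add)"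
proof -
  assume "k < n"
  have "(\<Sum>j<n. (if j = k then f j else 0)) = (\<Sum>j<n. (if j = k then f k else 0))" by (rule sum.cong) auto
  then show ?thesis using \<open>k < n\<close> by simp
qed

lemma sum_if_const: "(\<Sum>j\<in>A. (if P then f j else 0)) = (if P then (\<Sum>j\<in>A. f j) else (0 :: 'a::comm_monoid_add))"
  by (cases P) auto

lemma qf_shift:
  assumes k: "k < n"
  shows "qf n Q (\<lambda>i. x i + (if i = k then t else 0)) =
     qf n Q x + cnj t * (\<Sum>j<n. Q k j * x j) + t * (\<Sum>i<n. cnj (x i) * Q i k) + cnj t * t * Q k k"
proof -
  have e: "\<And>i j. cnj (x i + (if i = k then t else 0)) * Q i j * (x j + (if j = k then t else 0)) =
     cnj (x i) * Q i j * x j + (if j = k then cnj (x i) * Q i k * t else 0)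
     + (if i = k then cnj t * Q k j * x j else 0) + (if i = k then (if j = k then cnj t * Q k k * t else 0) else 0)"
    by (auto simp: algebra_simps)
  show ?thesis unfolding qf_def e sum.distrib using k
    by (simp add: sum_if_const sum.delta sum_distrib_left sum_distrib_right mult_ac)
qed

definition herm :: "nat \<Rightarrow> (nat \<Rightarrow> nat \<Rightarrow> complex) \<Rightarrow> bool" where
  "herm n Q \<longleftrightarrow> (\<forall>i<n. \<forall>j<n. Q i j = cnj (Q j i))"
definition qpos :: "nat \<Rightarrow> (nat \<Rightarrow> nat \<Rightarrow> complex) \<Rightarrow> bool" where
  "qpos n Q \<longleftrightarrow> (\<forall>x. Re (qf n Q x) \<ge> 0)"

lemma hermD: "herm n Q \<Longrightarrow> i < n \<Longrightarrow> j < n \<Longrightarrow> Q i j = cnj (Q j i)"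
  unfolding herm_def by blast

lemma qf_zero[simp]: "qf n Q (\<lambda>i. 0) = 0" unfolding qf_def by simp

lemma sum_unit_r: "j < (n::nat) \<Longrightarrow> (\<Sum>i<n. f i * (if i = j then 1 else 0)) = (f j :: complex)"
  using sum_if_eq[of j n f] by (simp add: if_distrib cong: if_cong)
lemma sum_unit_l: "j < (n::nat) \<Longrightarrow> (\<Sum>i<n. cnj (if i = j then 1 else 0) * f i) = (f j :: complex)"
proof -
  assume j: "j < n"
  have "(\<Sum>i<n. cnj (if i = j then 1 else 0) * f i) = (\<Sum>i<n. if i = j then f i else 0)" by (rule sum.cong) auto
  then show ?thesis using sum_if_eq[OF j, of f] by simp
qed

lemma qf_unit: "k < n \<Longrightarrow> qf n Q (\<lambda>i. if i = k then 1 else 0) = Q k k"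
  using qf_shift[of k n Q "\<lambda>i. 0" 1] by simp

lemma herm_diag_real: "herm n Q \<Longrightarrow> k < n \<Longrightarrow> Q k k = complex_of_real (Re (Q k k))"
proof -
  assume a: "herm n Q" "k < n"
  have "Im (Q k k) = Im (cnj (Q k k))" using hermD[OF a(1) a(2) a(2)] by simp
  then have "Im (Q k k) = 0" by simp
  then show ?thesis by (simp add: complex_eq_iff)
qed

lemma zero_diag:
  assumes h: "herm n Q" and p: "qpos n Q" and k: "k < n" and z: "Q k k = 0" and j: "j < n"
  shows "Q k j = 0"
proof (rule ccontr)
  assume nz: "Q k j \<noteq> 0"
  then have jk: "j \<noteq> k" using z by auto
  define s where "s = (Re (Q j j) + 1) / (cmod (Q k j))\<^sup>2"
  define t where "t = - complex_of_real s * Q k j"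
  define x where "x = (\<lambda>i. if i = j then 1 else (0::complex))"
  have Rjj: "Re (Q j j) \<ge> 0" using p qf_unit[OF j, of Q] unfolding qpos_def by metis
  have 1: "Re (qf n Q (\<lambda>i. x i + (if i = k then t else 0))) \<ge> 0" using p unfolding qpos_def by blast
  have 2: "qf n Q (\<lambda>i. x i + (if i = k then t else 0)) = Q j j + cnj t * Q k j + t * Q j k"
    using qf_shift[OF k, of Q x t] z j qf_unit[OF j, of Q] unfolding x_def
    by (simp add: sum_unit_r sum_unit_l)
  have 3: "Q j k = cnj (Q k j)" using hermD[OF h j k] .
  have cm: "cnj (Q k j) * Q k j = complex_of_real ((cmod (Q k j))\<^sup>2)"
    by (metis complex_norm_square mult.commute)
  have cm0: "(cmod (Q k j))\<^sup>2 \<noteq> 0" using nz by simp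
  have 4: "cnj t * Q k j = - complex_of_real (Re (Q j j) + 1)"
  proof -
    have "cnj t * Q k j = - complex_of_real s * (cnj (Q k j) * Q k j)" unfolding t_def by simp
    also have "\<dots> = - complex_of_real (s * (cmod (Q k j))\<^sup>2)" unfolding cm by simp
    also have "s * (cmod (Q k j))\<^sup>2 = Re (Q j j) + 1" unfolding s_def using cm0 by simp
    finally show ?thesis .
  qed
  have 5: "t * Q j k = cnj (cnj t * Q k j)" unfolding 3 by simp
  have "Re (Q j j + cnj t * Q k j + t * Q j k) = Re (Q j j) - 2 * (Re (Q j j) + 1)"
    unfolding 5 4 by simp
  then show False using 1 2 Rjj by simp
qed


lemma schur_qf:
  assumes h: "herm n Q" and k: "k < n" and c: "Q k k = complex_of_real c" and c0: "c \<noteq> 0"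
  shows "qf n (\<lambda>i j. Q i j - Q i k * Q k j / Q k k) x
       = qf n Q (\<lambda>i. x i + (if i = k then - (\<Sum>j<n. Q k j * x j) / Q k k else 0))"
proof -
  define s where "s = (\<Sum>j<n. Q k j * x j)"
  have cs: "(\<Sum>i<n. cnj (x i) * Q i k) = cnj s"
    unfolding s_def by (auto simp: hermD[OF h _ k] intro!: sum.cong)
  have "qf n (\<lambda>i j. Q i j - Q i k * Q k j / Q k k) x
     = qf n Q x - (\<Sum>i<n. cnj (x i) * Q i k) * (\<Sum>j<n. Q k j * x j) / Q k k"
    unfolding qf_def by (simp add: algebra_simps sum_subtractf sum_distrib_left sum_distrib_right sum_divide_distrib)
  also have "\<dots> = qf n Q x - cnj s * s / Q k k" unfolding cs s_def ..
  finally have L: "qf n (\<lambda>i j. Q i j - Q i k * Q k j / Q k k) x = qf n Q x - cnj s * s / Q k k" .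
  have R: "qf n Q (\<lambda>i. x i + (if i = k then - s / Q k k else 0))
     = qf n Q x + cnj (- s / Q k k) * s + (- s / Q k k) * cnj s + cnj (- s / Q k k) * (- s / Q k k) * Q k k"
    using qf_shift[OF k, of Q x "- s / Q k k"] unfolding cs s_def by simp
  show ?thesis unfolding s_def[symmetric] L R using c0 unfolding c
    by (simp add: field_simps power2_eq_square)
qed

lemma decomp_aux:
  "\<forall>Q :: nat \<Rightarrow> nat \<Rightarrow> complex. herm n Q \<longrightarrow> qpos n Q \<longrightarrow> (\<forall>i<n. \<forall>j<n. (i < n - r \<or> j < n - r) \<longrightarrow> Q i j = 0) \<longrightarrow>
     (\<exists>(N::nat) w. \<forall>i<n. \<forall>j<n. Q i j = (\<Sum>m<N. w m i * cnj (w m j)))"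
proof (induction r)
  case 0
  show ?case
  proof (intro allI impI)
    fix Q :: "nat \<Rightarrow> nat \<Rightarrow> complex" assume "herm n Q" "qpos n Q" "\<forall>i<n. \<forall>j<n. (i < n - 0 \<or> j < n - 0) \<longrightarrow> Q i j = 0"
    then have z0: "\<forall>i<n. \<forall>j<n. Q i j = 0" by simp
    show "\<exists>(N::nat) w. \<forall>i<n. \<forall>j<n. Q i j = (\<Sum>m<N. w m i * cnj (w m j))"
      using z0 by (rule_tac x=0 in exI) simp
  qed
next
  case (Suc r)
  show ?case
  proof (intro allI impI)
    fix Q assume h: "herm n Q" and p: "qpos n Q" and
      z: "\<forall>i<n. \<forall>j<n. (i < n - Suc r \<or> j < n - Suc r) \<longrightarrow> Q i j = 0"
    show "\<exists>(N::nat) w. \<forall>i<n. \<forall>j<n. Q i j = (\<Sum>m<N. w m i * cnj (w m j))"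
    proof (cases "r < n")
      case False
      then have "n - Suc r = n - r" by simp
      then show ?thesis using Suc.IH h p z unfolding \<open>n - Suc r = n - r\<close> by blast
    next
      case True
      define k where "k = n - Suc r"
      have k: "k < n" and nk: "n - r = Suc k" using True unfolding k_def by auto
      show ?thesis
      proof (cases "Q k k = 0")
        case True
        have row: "Q k j = 0" if "j < n" for j using zero_diag[OF h p k True that] .
        have col: "Q j k = 0" if "j < n" for j using hermD[OF h that k] row[OF that] by simp
        have "\<forall>i<n. \<forall>j<n. (i < n - r \<or> j < n - r) \<longrightarrow> Q i j = 0"
        proof (intro allI impI)
          fix i j assume ij: "i < n" "j < n" "i < n - r \<or> j < n - r"
          then consider "i < k" | "j < k" | "i = k" | "j = k" unfolding nk by linarith
          then show "Q i j = 0"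
          proof cases
            case 1 then show ?thesis using z ij unfolding k_def by blast
          next
            case 2 then show ?thesis using z ij unfolding k_def by blast
          next
            case 3 then show ?thesis using row ij by simp
          next
            case 4 then show ?thesis using col ij by simp
          qed
        qed
        then show ?thesis using Suc.IH h p by blast
      next
        case False
        define c where "c = Re (Q k k)"
        have c: "Q k k = complex_of_real c" unfolding c_def using herm_diag_real[OF h k] .
        have c0: "c \<noteq> 0" using False c by auto
        have "Re (qf n Q (\<lambda>i. if i = k then 1 else 0)) \<ge> 0" using p unfolding qpos_def by blast
        then have cpos: "c \<ge> 0" unfolding qf_unit[OF k] c_def .
        define Q' where "Q' = (\<lambda>i j. Q i j - Q i k * Q k j / Q k k)"
        have h': "herm n Q'" unfolding herm_def Q'_def
        proof (intro allI impI)
          fix i j assume ij: "i < n" "j < n"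
          show "Q i j - Q i k * Q k j / Q k k = cnj (Q j i - Q j k * Q k i / Q k k)"
          proof -
            have "cnj (Q j i - Q j k * Q k i / Q k k) = cnj (Q j i) - cnj (Q j k) * cnj (Q k i) / cnj (Q k k)" by simp
            also have "cnj (Q j i) = Q i j" using hermD[OF h ij(2) ij(1)] by simp
            also have "cnj (Q j k) = Q k j" using hermD[OF h ij(2) k] by simp
            also have "cnj (Q k i) = Q i k" using hermD[OF h k ij(1)] by simp
            also have "cnj (Q k k) = Q k k" unfolding c by simp
            finally show ?thesis by (simp add: mult.commute)
          qed
        qed
        have p': "qpos n Q'" unfolding qpos_def Q'_def
        proof
          fix x
          show "Re (qf n (\<lambda>i j. Q i j - Q i k * Q k j / Q k k) x) \<ge> 0"
            unfolding schur_qf[OF h k c c0] using p unfolding qpos_def by blast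
        qed
        have z': "\<forall>i<n. \<forall>j<n. (i < n - r \<or> j < n - r) \<longrightarrow> Q' i j = 0"
        proof (intro allI impI)
          fix i j assume ij: "i < n" "j < n" "i < n - r \<or> j < n - r"
          then consider "i < k" | "j < k" | "i = k" | "j = k" unfolding nk by linarith
          then show "Q' i j = 0"
          proof cases
            case 1
            then have "Q i j = 0" "Q i k = 0" using z ij k unfolding k_def by blast+
            then show ?thesis unfolding Q'_def by simp
          next
            case 2
            then have "Q i j = 0" "Q k j = 0" using z ij k unfolding k_def by blast+
            then show ?thesis unfolding Q'_def by simp
          next
            case 3 then show ?thesis using False unfolding Q'_def by simp
          next
            case 4 then show ?thesis using False unfolding Q'_def by simp
          qed
        qed
        obtain N :: nat and w where w: "\<forall>i<n. \<forall>j<n. Q' i j = (\<Sum>m<N. w m i * cnj (w m j))"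
          using Suc.IH h' p' z' by blast
        define wk where "wk = (\<lambda>i. Q i k / complex_of_real (sqrt c))"
        define w2 where "w2 = w(N := wk)"
        have fin: "\<forall>i<n. \<forall>j<n. Q i j = (\<Sum>m<Suc N. w2 m i * cnj (w2 m j))"
        proof (intro allI impI)
          fix i j assume ij: "i < n" "j < n"
          have "(\<Sum>m<Suc N. w2 m i * cnj (w2 m j)) = (\<Sum>m<N. w m i * cnj (w m j)) + wk i * cnj (wk j)"
            unfolding w2_def by simp
          also have "\<dots> = Q' i j + wk i * cnj (wk j)" using w ij by simp
          also have "wk i * cnj (wk j) = Q i k * Q k j / Q k k"
          proof -
            have "cnj (Q j k) = Q k j" using hermD[OF h k ij(2)] by simp
            moreover have "complex_of_real (sqrt c) * complex_of_real (sqrt c) = complex_of_real c"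
              using cpos by (simp flip: of_real_mult)
            ultimately show ?thesis unfolding wk_def c by simp
          qed
          finally show "Q i j = (\<Sum>m<Suc N. w2 m i * cnj (w2 m j))" unfolding Q'_def by simp
        qed
        show ?thesis by (rule exI[of _ "Suc N"], rule exI[of _ w2], rule fin)
      qed
    qed
  qed
qed

lemma decomp:
  assumes "herm n Q" "qpos n Q"
  shows "\<exists>(N::nat) w. \<forall>i<n. \<forall>j<n. Q i j = (\<Sum>m<N. w m i * cnj (w m j))"
  using decomp_aux[of n n] assms by auto


lemma form_eq_qf:
  assumes "M \<in> carrier_mat n n" "v \<in> carrier_vec n"
  shows "(M *\<^sub>v v) \<bullet>c v = qf n (\<lambda>i j. M $$ (i,j)) (\<lambda>i. v $ i)"
proof -
  have "(M *\<^sub>v v) \<bullet>c v = (\<Sum>i<n. (\<Sum>j<n. M $$ (i,j) * v $ j) * cnj (v $ i))"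
    using assms unfolding scalar_prod_def
    by (auto simp: atLeast0LessThan scalar_prod_def intro!: sum.cong)
  also have "\<dots> = qf n (\<lambda>i j. M $$ (i,j)) (\<lambda>i. v $ i)"
    unfolding qf_def by (simp add: sum_distrib_right sum_distrib_left mult_ac)
  finally show ?thesis .
qed

lemma psd_qf:
  assumes "psd n M"
  shows "qf n (\<lambda>i j. M $$ (i,j)) x \<ge> 0"
proof -
  have M: "M \<in> carrier_mat n n" using assms unfolding psd_def hermitian_def by auto
  have v: "vec n x \<in> carrier_vec n" by simp
  have "(M *\<^sub>v vec n x) \<bullet>c vec n x \<ge> 0" using assms v unfolding psd_def by blast
  moreover have "(M *\<^sub>v vec n x) \<bullet>c vec n x = qf n (\<lambda>i j. M $$ (i,j)) x"
    using form_eq_qf[OF M v] unfolding qf_def by simp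
  ultimately show ?thesis by simp
qed

lemma qf_real:
  assumes "\<forall>i<n. \<forall>j<n. A i j = cnj (A j i)"
  shows "cnj (qf n A x) = qf n A x"
proof -
  have "cnj (qf n A x) = (\<Sum>i<n. \<Sum>j<n. x i * cnj (A i j) * cnj (x j))"
    unfolding qf_def by simp
  also have "\<dots> = (\<Sum>i<n. \<Sum>j<n. x i * A j i * cnj (x j))"
  proof (intro sum.cong refl)
    fix i j assume "i \<in> {..<n}" "j \<in> {..<n}"
    then have "cnj (A i j) = A j i" using assms by (metis complex_cnj_cnj lessThan_iff)
    then show "x i * cnj (A i j) * cnj (x j) = x i * A j i * cnj (x j)" by simp
  qed
  also have "\<dots> = qf n A x"
    unfolding qf_def by (subst sum.swap) (simp add: mult_ac)
  finally show ?thesis .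
qed

lemma qf_Im: assumes "\<forall>i<n. \<forall>j<n. A i j = cnj (A j i)" shows "Im (qf n A x) = 0"
proof -
  have "Im (cnj (qf n A x)) = Im (qf n A x)" using qf_real[OF assms, of x] by simp
  then show ?thesis by simp
qed

lemma psd_intro:
  assumes "hermitian n M" "\<And>x. Re (qf n (\<lambda>i j. M $$ (i,j)) x) \<ge> 0"
  shows "psd n M"
  unfolding psd_def
proof (intro conjI ballI)
  show "hermitian n M" by fact
  fix v :: "complex vec" assume v: "v \<in> carrier_vec n"
  have M: "M \<in> carrier_mat n n" using assms unfolding hermitian_def by auto
  have h: "\<forall>i<n. \<forall>j<n. M $$ (i,j) = cnj (M $$ (j,i))" using assms(1) unfolding hermitian_def by blast
  show "(M *\<^sub>v v) \<bullet>c v \<ge> 0"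
    unfolding form_eq_qf[OF M v] using assms(2) qf_Im[OF h] by (simp add: less_eq_complex_def)
qed

lemma psd_herm: "psd n M \<Longrightarrow> \<forall>i<n. \<forall>j<n. M $$ (i,j) = cnj (M $$ (j,i))"
  unfolding psd_def hermitian_def by blast



lemma gram_trace:
  fixes u :: "'p \<Rightarrow> nat \<Rightarrow> complex" and z :: "'m \<Rightarrow> nat \<Rightarrow> complex"
  assumes fin: "finite I" "finite J"
    and P: "\<forall>K<D. \<forall>L<D. P K L = (\<Sum>p\<in>I. u p K * cnj (u p L))"
    and Q: "\<forall>K<D. \<forall>L<D. Q K L = (\<Sum>m\<in>J. z m K * cnj (z m L))"
  shows "Re (\<Sum>K<D. \<Sum>L<D. P K L * Q L K) \<ge> 0"
proof -
  define f where "f = (\<lambda>K L p m. u p K * cnj (z m K) * (cnj (u p L) * z m L))"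
  have "(\<Sum>K<D. \<Sum>L<D. P K L * Q L K) = (\<Sum>K<D. \<Sum>L<D. \<Sum>p\<in>I. \<Sum>m\<in>J. f K L p m)"
    using P Q unfolding f_def
    by (auto intro!: sum.cong simp: sum_distrib_left sum_distrib_right mult_ac)
  also have "\<dots> = (\<Sum>K<D. \<Sum>p\<in>I. \<Sum>L<D. \<Sum>m\<in>J. f K L p m)"
    by (rule sum.cong[OF refl], rule sum.swap)
  also have "\<dots> = (\<Sum>p\<in>I. \<Sum>K<D. \<Sum>L<D. \<Sum>m\<in>J. f K L p m)"
    by (rule sum.swap)
  also have "\<dots> = (\<Sum>p\<in>I. \<Sum>K<D. \<Sum>m\<in>J. \<Sum>L<D. f K L p m)"
    by (intro sum.cong refl, rule sum.swap)
  also have "\<dots> = (\<Sum>p\<in>I. \<Sum>m\<in>J. \<Sum>K<D. \<Sum>L<D. f K L p m)"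
    by (intro sum.cong refl, rule sum.swap)
  also have "\<dots> = (\<Sum>p\<in>I. \<Sum>m\<in>J. (\<Sum>K<D. u p K * cnj (z m K)) * cnj (\<Sum>K<D. u p K * cnj (z m K)))"
    unfolding f_def by (simp add: sum_product mult_ac)
  finally have e: "(\<Sum>K<D. \<Sum>L<D. P K L * Q L K) = \<dots>" .
  have aux: "\<And>a::complex. Re (a * cnj a) \<ge> 0" by (simp add: add_nonneg_nonneg)
  show ?thesis unfolding e Re_sum by (intro sum_nonneg aux)
qed



lemma split_sum: fixes f :: "nat \<Rightarrow> 'a::comm_monoid_add"
  shows "(\<Sum>k<m*n. f k) = (\<Sum>i<m. \<Sum>j<n. f (i*n+j))"
proof -
  have "(\<Sum>k<m*n. f k) = (\<Sum>i<m. sum f {i*n..<i*n+n})" by (rule sum.nat_group[symmetric])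
  also have "\<dots> = (\<Sum>i<m. \<Sum>j<n. f (i*n+j))"
  proof (rule sum.cong[OF refl])
    fix i
    have "sum f {i*n..<i*n+n} = sum f {0+i*n..<n+i*n}" by (simp add: add.commute)
    also have "\<dots> = (\<Sum>j=0..<n. f (j + i*n))" by (rule sum.shift_bounds_nat_ivl)
    finally show "sum f {i*n..<i*n+n} = (\<Sum>j<n. f (i*n+j))" by (simp add: atLeast0LessThan add.commute)
  qed
  finally show ?thesis .
qed
lemma dm[simp]: "j < (n::nat) \<Longrightarrow> (i*n+j) div n = i" "j < (n::nat) \<Longrightarrow> (i*n+j) mod n = j"
  by auto

lemma sum4: "(\<Sum>r<(4::nat). f r) = f 0 + f 1 + f 2 + (f 3 :: 'a::comm_monoid_add)"
  by (simp add: eval_nat_numeral add.assoc)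

definition alph :: "nat \<Rightarrow> nat \<Rightarrow> complex" where
  "alph i j = (if i = j then 1 else 1 / complex_of_real (sqrt 2))"
definition bet :: "nat \<Rightarrow> nat \<Rightarrow> nat \<Rightarrow> complex" where
  "bet i j r = (if i = j then 0 else \<i> ^ r / complex_of_real (sqrt 2))"
definition U :: "nat \<Rightarrow> nat \<Rightarrow> nat \<Rightarrow> nat \<Rightarrow> complex" where
  "U i j r a = alph i j * (if a = i then 1 else 0) + bet i j r * (if a = j then 1 else 0)"
definition Cf :: "nat \<Rightarrow> nat \<Rightarrow> nat \<Rightarrow> complex" where
  "Cf i j r = (if i = j then 1/4 else \<i> ^ r / 2)"

lemma sqrt2sq: "complex_of_real (sqrt 2) * complex_of_real (sqrt 2) = 2"
  by (simp flip: of_real_mult)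

lemma G: "(\<Sum>r<4. Cf i j r * (U i j r a * cnj (U i j r b))) = (if a = i \<and> b = j then 1 else 0)"
proof (cases "i = j")
  case True
  then show ?thesis unfolding Cf_def U_def alph_def bet_def sum4 by auto
next
  case False
  have s: "1 / complex_of_real (sqrt 2) * (1 / complex_of_real (sqrt 2)) = 1/2"
    using sqrt2sq by (simp add: field_simps)
  show ?thesis using False unfolding Cf_def U_def alph_def bet_def sum4
    by (auto simp: field_simps sqrt2sq power3_eq_cube)
qed

definition Us :: "nat \<Rightarrow> nat \<Rightarrow> nat \<Rightarrow> complex" where
  "Us d s = U (s div 4 div d) (s div 4 mod d) (s mod 4)"
definition Cs :: "nat \<Rightarrow> nat \<Rightarrow> complex" where
  "Cs d s = Cf (s div 4 div d) (s div 4 mod d) (s mod 4)"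
definition psi :: "nat \<Rightarrow> nat \<Rightarrow> complex mat" where
  "psi d s = mat d d (\<lambda>(a,b). Us d s a * cnj (Us d s b))"

lemma sum_enc: fixes g :: "nat \<Rightarrow> 'a::comm_monoid_add"
  shows "(\<Sum>s<d*d*4. g s) = (\<Sum>i<d. \<Sum>j<d. \<Sum>r<4. g ((i*d+j)*4+r))"
  by (simp add: split_sum)

lemma H:
  assumes a: "a < d" and b: "b < d"
  shows "(\<Sum>s<d*d*4. F (s div 4 div d) (s div 4 mod d) * (Cs d s * psi d s $$ (a,b))) = F a b"
proof -
  have "(\<Sum>s<d*d*4. F (s div 4 div d) (s div 4 mod d) * (Cs d s * psi d s $$ (a,b)))
     = (\<Sum>i<d. \<Sum>j<d. \<Sum>r<4. F i j * (Cf i j r * (U i j r a * cnj (U i j r b))))"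
    unfolding sum_enc
  proof (intro sum.cong refl)
    fix i j r assume ij: "i \<in> {..<d}" "j \<in> {..<d}" "r \<in> {..<(4::nat)}"
    have D1: "((i*d+j)*4+r) div 4 = i*d+j" using ij by simp
    have D2: "(i*d+j) div d = i" "(i*d+j) mod d = j" "((i*d+j)*4+r) mod 4 = r" using ij by (simp_all only: dm lessThan_iff)
    show "F (((i*d+j)*4+r) div 4 div d) (((i*d+j)*4+r) div 4 mod d) * (Cs d ((i*d+j)*4+r) * psi d ((i*d+j)*4+r) $$ (a,b))
       = F i j * (Cf i j r * (U i j r a * cnj (U i j r b)))"
      unfolding psi_def Us_def Cs_def D1 D2 using a b by simp
  qed
  also have "\<dots> = (\<Sum>i<d. \<Sum>j<d. F i j * (if a = i \<and> b = j then 1 else 0))"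
    by (simp add: sum_distrib_left[symmetric] G)
  also have "\<dots> = (\<Sum>i<d. if i = a then F i b else 0)"
    using b by (intro sum.cong refl) (auto simp: if_distrib sum.delta cong: if_cong)
  also have "\<dots> = F a b" using sum_if_eq[OF a, of "\<lambda>i. F i b"] .
  finally show ?thesis .
qed

lemma psi_herm: "a < d \<Longrightarrow> b < d \<Longrightarrow> cnj (psi d s $$ (a,b)) = psi d s $$ (b,a)"
  unfolding psi_def by (simp add: mult.commute)


definition Kc :: "(nat \<Rightarrow> complex) \<Rightarrow> nat \<Rightarrow> nat \<Rightarrow> nat \<Rightarrow> nat \<Rightarrow> nat \<Rightarrow> complex" where
  "Kc v dB i j k l = cnj (v (i*dB + k)) * v (j*dB + l)"
definition gam :: "(nat \<Rightarrow> complex) \<Rightarrow> nat \<Rightarrow> nat \<Rightarrow> nat \<Rightarrow> nat \<Rightarrow> complex" where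
  "gam v dA dB s t = Cs dA s * Cs dB t * Kc v dB (s div 4 div dA) (s div 4 mod dA) (t div 4 div dB) (t div 4 mod dB)"

lemma E_c:
  assumes a: "a < dA" and b: "b < dA" and c: "c < dB" and e: "e < dB"
  shows "(\<Sum>s<dA*dA*4. \<Sum>t<dB*dB*4. gam v dA dB s t * (psi dA s $$ (a,b) * psi dB t $$ (c,e))) = Kc v dB a b c e"
proof -
  have "(\<Sum>s<dA*dA*4. \<Sum>t<dB*dB*4. gam v dA dB s t * (psi dA s $$ (a,b) * psi dB t $$ (c,e)))
      = (\<Sum>s<dA*dA*4. (\<lambda>i j. Kc v dB i j c e) (s div 4 div dA) (s div 4 mod dA) * (Cs dA s * psi dA s $$ (a,b)))"
  proof (rule sum.cong[OF refl])
    fix s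
    have "(\<Sum>t<dB*dB*4. gam v dA dB s t * (psi dA s $$ (a,b) * psi dB t $$ (c,e)))
      = (Cs dA s * psi dA s $$ (a,b)) * (\<Sum>t<dB*dB*4. (\<lambda>k l. Kc v dB (s div 4 div dA) (s div 4 mod dA) k l) (t div 4 div dB) (t div 4 mod dB) * (Cs dB t * psi dB t $$ (c,e)))"
      unfolding gam_def sum_distrib_left by (intro sum.cong refl) (simp add: mult_ac)
    also have "\<dots> = (Cs dA s * psi dA s $$ (a,b)) * Kc v dB (s div 4 div dA) (s div 4 mod dA) c e"
      by (subst H[OF c e]) (rule refl)
    finally show "(\<Sum>t<dB*dB*4. gam v dA dB s t * (psi dA s $$ (a,b) * psi dB t $$ (c,e)))
      = (\<lambda>i j. Kc v dB i j c e) (s div 4 div dA) (s div 4 mod dA) * (Cs dA s * psi dA s $$ (a,b))"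
      by (simp add: mult_ac)
  qed
  also have "\<dots> = Kc v dB a b c e" by (rule H[OF a b])
  finally show ?thesis .
qed

lemma E_r:
  assumes a: "a < dA" and b: "b < dA" and c: "c < dB" and e: "e < dB"
  shows "(\<Sum>s<dA*dA*4. \<Sum>t<dB*dB*4. complex_of_real (Re (gam v dA dB s t)) * (psi dA s $$ (a,b) * psi dB t $$ (c,e))) = Kc v dB a b c e"
proof -
  have re: "complex_of_real (Re z) = (z + cnj z) / 2" for z by (simp add: complex_eq_iff)
  have "(\<Sum>s<dA*dA*4. \<Sum>t<dB*dB*4. cnj (gam v dA dB s t) * (psi dA s $$ (a,b) * psi dB t $$ (c,e)))
     = cnj (\<Sum>s<dA*dA*4. \<Sum>t<dB*dB*4. gam v dA dB s t * (psi dA s $$ (b,a) * psi dB t $$ (e,c)))"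
  proof -
    have "(\<Sum>s<dA*dA*4. \<Sum>t<dB*dB*4. cnj (gam v dA dB s t) * (psi dA s $$ (a,b) * psi dB t $$ (c,e)))
       = (\<Sum>s<dA*dA*4. \<Sum>t<dB*dB*4. cnj (gam v dA dB s t * (psi dA s $$ (b,a) * psi dB t $$ (e,c))))"
      by (intro sum.cong refl) (simp only: complex_cnj_mult psi_herm[OF b a] psi_herm[OF e c])
    then show ?thesis by (simp only: cnj_sum)
  qed
  also have "\<dots> = cnj (Kc v dB b a e c)" using E_c[OF b a e c] by simp
  also have "\<dots> = Kc v dB a b c e" unfolding Kc_def by (simp add: mult.commute)
  finally have 2: "(\<Sum>s<dA*dA*4. \<Sum>t<dB*dB*4. cnj (gam v dA dB s t) * (psi dA s $$ (a,b) * psi dB t $$ (c,e))) = Kc v dB a b c e" .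
  show ?thesis unfolding re using E_c[OF a b c e] 2
    by (simp add: add_divide_distrib sum.distrib distrib_right sum_divide_distrib[symmetric])
qed




lemma swap22: "(\<Sum>s\<in>A. \<Sum>t\<in>B. \<Sum>K\<in>C. \<Sum>L\<in>E. f s t K L) = (\<Sum>K\<in>C. \<Sum>L\<in>E. \<Sum>s\<in>A. \<Sum>t\<in>B. (f s t K L :: 'a::comm_monoid_add))"
proof -
  have "(\<Sum>s\<in>A. \<Sum>t\<in>B. \<Sum>K\<in>C. \<Sum>L\<in>E. f s t K L) = (\<Sum>s\<in>A. \<Sum>K\<in>C. \<Sum>t\<in>B. \<Sum>L\<in>E. f s t K L)"
    by (rule sum.cong[OF refl], rule sum.swap)
  also have "\<dots> = (\<Sum>K\<in>C. \<Sum>s\<in>A. \<Sum>t\<in>B. \<Sum>L\<in>E. f s t K L)" by (rule sum.swap)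
  also have "\<dots> = (\<Sum>K\<in>C. \<Sum>s\<in>A. \<Sum>L\<in>E. \<Sum>t\<in>B. f s t K L)"
    by (intro sum.cong refl, rule sum.swap)
  also have "\<dots> = (\<Sum>K\<in>C. \<Sum>L\<in>E. \<Sum>s\<in>A. \<Sum>t\<in>B. f s t K L)"
    by (intro sum.cong refl, rule sum.swap)
  finally show ?thesis .
qed

definition zi :: "nat \<Rightarrow> nat \<Rightarrow> nat \<Rightarrow> nat" where
  "zi dA dB L = (L div (dB*dB)) div dA * dB + (L mod (dB*dB)) div dB"
definition oa :: "nat \<Rightarrow> nat \<Rightarrow> nat \<Rightarrow> nat" where
  "oa dA dB L = (L div (dB*dB)) mod dA"
definition ob :: "nat \<Rightarrow> nat \<Rightarrow> nat" where
  "ob dB L = (L mod (dB*dB)) mod dB"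

lemma mtrace_mult:
  assumes "X \<in> carrier_mat n n" "Y \<in> carrier_mat n n"
  shows "mtrace (X * Y) = (\<Sum>K<n. \<Sum>L<n. X $$ (K,L) * Y $$ (L,K))"
  using assms unfolding mtrace_def
  by (simp add: scalar_prod_def atLeast0LessThan)

lemma kron_idx:
  assumes A: "A \<in> carrier_mat n1 n1" and B: "B \<in> carrier_mat n2 n2" and K: "K < n1*n2" and L: "L < n1*n2"
  shows "kron A B $$ (K,L) = A $$ (K div n2, L div n2) * B $$ (K mod n2, L mod n2)"
  using A B K L unfolding kron_def by simp

lemma js_idx:
  assumes L: "L < dA*dAo*(dB*dBo)" and K: "K < dA*dAo*(dB*dBo)"
  shows "joint_state dA dAo dB dBo ps Z ph $$ (L,K) =
    Z $$ ((L div (dB*dBo)) div dAo * dB + (L mod (dB*dBo)) div dBo, (K div (dB*dBo)) div dAo * dB + (K mod (dB*dBo)) div dBo)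
    * ps $$ ((L div (dB*dBo)) mod dAo, (K div (dB*dBo)) mod dAo) * ph $$ ((L mod (dB*dBo)) mod dBo, (K mod (dB*dBo)) mod dBo)"
  using L K unfolding joint_state_def Let_def by simp

lemma corr_eq:
  assumes A: "A \<in> carrier_mat (dA*dA) (dA*dA)" and B: "B \<in> carrier_mat (dB*dB) (dB*dB)"
  shows "correlation dA dA dB dB A B ps Z ph =
    Re (\<Sum>K<dA*dA*(dB*dB). \<Sum>L<dA*dA*(dB*dB).
       (A $$ (K div (dB*dB), L div (dB*dB)) * B $$ (K mod (dB*dB), L mod (dB*dB))) *
       (Z $$ (zi dA dB L, zi dA dB K) * ps $$ (oa dA dB L, oa dA dB K) * ph $$ (ob dB L, ob dB K)))"
proof -
  have kc: "kron A B \<in> carrier_mat (dA*dA*(dB*dB)) (dA*dA*(dB*dB))"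
    using A B unfolding kron_def by auto
  have jc: "joint_state dA dA dB dB ps Z ph \<in> carrier_mat (dA*dA*(dB*dB)) (dA*dA*(dB*dB))"
    unfolding joint_state_def by auto
  show ?thesis unfolding correlation_def mtrace_mult[OF kc jc]
  proof (intro arg_cong[where f=Re] sum.cong refl)
    fix K L assume K: "K \<in> {..<dA*dA*(dB*dB)}" and L: "L \<in> {..<dA*dA*(dB*dB)}"
    show "kron A B $$ (K, L) * joint_state dA dA dB dB ps Z ph $$ (L, K) =
       (A $$ (K div (dB*dB), L div (dB*dB)) * B $$ (K mod (dB*dB), L mod (dB*dB))) *
       (Z $$ (zi dA dB L, zi dA dB K) * ps $$ (oa dA dB L, oa dA dB K) * ph $$ (ob dB L, ob dB K))"
      unfolding kron_idx[OF A B K[simplified] L[simplified]] js_idx[OF L[simplified] K[simplified]]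
        zi_def oa_def ob_def ..
  qed
qed


definition bt :: "(nat \<Rightarrow> complex) \<Rightarrow> nat \<Rightarrow> nat \<Rightarrow> nat \<Rightarrow> nat \<Rightarrow> nat \<Rightarrow> nat \<Rightarrow> real" where
  "bt v dA dB s a t b = (if a = 0 \<and> b = 0 then Re (gam v dA dB s t) else 0)"

lemma sum2: "(\<Sum>a<(2::nat). f a) = f 0 + (f 1 :: 'a::comm_monoid_add)"
  by (simp add: numeral_2_eq_2)

lemma payoff_eq:
  assumes A: "M 0 \<in> carrier_mat (dA*dA) (dA*dA)" and B: "N 0 \<in> carrier_mat (dB*dB) (dB*dB)"
    and dA: "0 < dA" and dB: "0 < dB"
  shows "payoff dA dB dA dB (dA*dA*4) (dB*dB*4) 2 2 (psi dA) (psi dB) (bt v dA dB) M N Z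
    = Re (\<Sum>K<dA*dA*(dB*dB). \<Sum>L<dA*dA*(dB*dB).
       (M 0 $$ (K div (dB*dB), L div (dB*dB)) * N 0 $$ (K mod (dB*dB), L mod (dB*dB))) *
       (Z $$ (zi dA dB L, zi dA dB K) * Kc v dB (oa dA dB L) (oa dA dB K) (ob dB L) (ob dB K)))"
proof -
  define D where "D = dA*dA*(dB*dB)"
  define X where "X = (\<lambda>K L. M 0 $$ (K div (dB*dB), L div (dB*dB)) * N 0 $$ (K mod (dB*dB), L mod (dB*dB)))"
  define Y where "Y = (\<lambda>s t K L. Z $$ (zi dA dB L, zi dA dB K) * psi dA s $$ (oa dA dB L, oa dA dB K) * psi dB t $$ (ob dB L, ob dB K))"
  have "payoff dA dB dA dB (dA*dA*4) (dB*dB*4) 2 2 (psi dA) (psi dB) (bt v dA dB) M N Z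
     = (\<Sum>s<dA*dA*4. \<Sum>t<dB*dB*4. Re (gam v dA dB s t) * correlation dA dA dB dB (M 0) (N 0) (psi dA s) Z (psi dB t))"
    unfolding payoff_def bt_def sum2 by simp
  also have "\<dots> = (\<Sum>s<dA*dA*4. \<Sum>t<dB*dB*4. Re (\<Sum>K<D. \<Sum>L<D. complex_of_real (Re (gam v dA dB s t)) * (X K L * Y s t K L)))"
    unfolding corr_eq[OF A B] X_def Y_def D_def
    by (simp add: sum_distrib_left Re_sum)
  also have "\<dots> = Re (\<Sum>s<dA*dA*4. \<Sum>t<dB*dB*4. \<Sum>K<D. \<Sum>L<D. complex_of_real (Re (gam v dA dB s t)) * (X K L * Y s t K L))"
    by (simp add: Re_sum)
  also have "\<dots> = Re (\<Sum>K<D. \<Sum>L<D. \<Sum>s<dA*dA*4. \<Sum>t<dB*dB*4. complex_of_real (Re (gam v dA dB s t)) * (X K L * Y s t K L))"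
    by (rule arg_cong[where f=Re], rule swap22)
  also have "\<dots> = Re (\<Sum>K<D. \<Sum>L<D. X K L * (Z $$ (zi dA dB L, zi dA dB K) * Kc v dB (oa dA dB L) (oa dA dB K) (ob dB L) (ob dB K)))"
  proof (intro arg_cong[where f=Re] sum.cong refl)
    fix K L
    have oa: "oa dA dB L < dA" "oa dA dB K < dA" unfolding oa_def using dA by simp_all
    have ob: "ob dB L < dB" "ob dB K < dB" unfolding ob_def using dB by simp_all
    have "(\<Sum>s<dA*dA*4. \<Sum>t<dB*dB*4. complex_of_real (Re (gam v dA dB s t)) * (X K L * Y s t K L))
      = X K L * Z $$ (zi dA dB L, zi dA dB K) * (\<Sum>s<dA*dA*4. \<Sum>t<dB*dB*4. complex_of_real (Re (gam v dA dB s t)) *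
          (psi dA s $$ (oa dA dB L, oa dA dB K) * psi dB t $$ (ob dB L, ob dB K)))"
      unfolding Y_def sum_distrib_left by (intro sum.cong refl) (simp add: mult_ac)
    also have "\<dots> = X K L * Z $$ (zi dA dB L, zi dA dB K) * Kc v dB (oa dA dB L) (oa dA dB K) (ob dB L) (ob dB K)"
      unfolding E_r[OF oa ob] ..
    finally show "(\<Sum>s<dA*dA*4. \<Sum>t<dB*dB*4. complex_of_real (Re (gam v dA dB s t)) * (X K L * Y s t K L))
      = X K L * (Z $$ (zi dA dB L, zi dA dB K) * Kc v dB (oa dA dB L) (oa dA dB K) (ob dB L) (ob dB K))"
      by (simp add: mult_ac)
  qed
  finally show ?thesis unfolding X_def D_def .
qed


lemma psd_herm': "psd n M \<Longrightarrow> herm n (\<lambda>i j. M $$ (i,j))"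
  unfolding herm_def using psd_herm by blast
lemma psd_qpos: "psd n M \<Longrightarrow> qpos n (\<lambda>i j. M $$ (i,j))"
  unfolding qpos_def using psd_qf by (simp add: less_eq_complex_def)

lemma idx_lt: "x < (a::nat) \<Longrightarrow> y < b \<Longrightarrow> x*b + y < a*b"
proof -
  assume "x < a" "y < b"
  then have "x*b + y < x*b + b" by simp
  also have "\<dots> = (x+1)*b" by simp
  also have "\<dots> \<le> a*b" using \<open>x < a\<close> by (intro mult_right_mono) auto
  finally show ?thesis .
qed

lemma rho_side:
  assumes rho: "density (dA*dB) \<rho>" and M: "povm (dA*dA) 2 M" and N: "povm (dB*dB) 2 N"
    and dA: "0 < dA" and dB: "0 < dB"
  shows "payoff dA dB dA dB (dA*dA*4) (dB*dB*4) 2 2 (psi dA) (psi dB) (bt v dA dB) M N \<rho> \<ge> 0"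
proof -
  define D where "D = dA*dA*(dB*dB)"
  have M0: "psd (dA*dA) (M 0)" using M unfolding povm_def by simp
  have N0: "psd (dB*dB) (N 0)" using N unfolding povm_def by simp
  have R: "psd (dA*dB) \<rho>" using rho unfolding density_def by simp
  have Mc: "M 0 \<in> carrier_mat (dA*dA) (dA*dA)" using M0 unfolding psd_def hermitian_def by simp
  have Nc: "N 0 \<in> carrier_mat (dB*dB) (dB*dB)" using N0 unfolding psd_def hermitian_def by simp
  obtain N1 :: nat and al where al: "\<forall>i<dA*dA. \<forall>j<dA*dA. M 0 $$ (i,j) = (\<Sum>m<N1. al m i * cnj (al m j))"
    using decomp[OF psd_herm'[OF M0] psd_qpos[OF M0]] by blast
  obtain N2 :: nat and be where be: "\<forall>i<dB*dB. \<forall>j<dB*dB. N 0 $$ (i,j) = (\<Sum>m<N2. be m i * cnj (be m j))"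
    using decomp[OF psd_herm'[OF N0] psd_qpos[OF N0]] by blast
  obtain N3 :: nat and y where y: "\<forall>i<dA*dB. \<forall>j<dA*dB. \<rho> $$ (i,j) = (\<Sum>m<N3. y m i * cnj (y m j))"
    using decomp[OF psd_herm'[OF R] psd_qpos[OF R]] by blast
  define u where "u = (\<lambda>(p,q) K. al p (K div (dB*dB)) * be q (K mod (dB*dB)))"
  define z where "z = (\<lambda>m L. y m (zi dA dB L) * cnj (v (oa dA dB L * dB + ob dB L)))"
  have P: "\<forall>K<D. \<forall>L<D. M 0 $$ (K div (dB*dB), L div (dB*dB)) * N 0 $$ (K mod (dB*dB), L mod (dB*dB))
      = (\<Sum>pq\<in>{..<N1}\<times>{..<N2}. u pq K * cnj (u pq L))"
  proof (intro allI impI)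
    fix K L assume K: "K < D" and L: "L < D"
    have k1: "K div (dB*dB) < dA*dA" "L div (dB*dB) < dA*dA" using K L dB unfolding D_def
      by (simp_all add: less_mult_imp_div_less)
    have k2: "K mod (dB*dB) < dB*dB" "L mod (dB*dB) < dB*dB" using dB by simp_all
    show "M 0 $$ (K div (dB*dB), L div (dB*dB)) * N 0 $$ (K mod (dB*dB), L mod (dB*dB))
      = (\<Sum>pq\<in>{..<N1}\<times>{..<N2}. u pq K * cnj (u pq L))"
      unfolding al[rule_format, OF k1] be[rule_format, OF k2] sum_product sum.cartesian_product u_def
      by (intro sum.cong refl) (auto simp: mult_ac)
  qed
  have Q: "\<forall>L<D. \<forall>K<D. \<rho> $$ (zi dA dB L, zi dA dB K) * Kc v dB (oa dA dB L) (oa dA dB K) (ob dB L) (ob dB K)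
      = (\<Sum>m<N3. z m L * cnj (z m K))"
  proof (intro allI impI)
    fix K L assume K: "K < D" and L: "L < D"
    have zb: "zi dA dB L < dA*dB" "zi dA dB K < dA*dB"
      unfolding zi_def using K L dA dB unfolding D_def
      by (auto intro!: idx_lt simp: less_mult_imp_div_less)
    show "\<rho> $$ (zi dA dB L, zi dA dB K) * Kc v dB (oa dA dB L) (oa dA dB K) (ob dB L) (ob dB K)
      = (\<Sum>m<N3. z m L * cnj (z m K))"
      unfolding y[rule_format, OF zb] z_def Kc_def sum_distrib_right
      by (intro sum.cong refl) (simp add: mult_ac)
  qed
  have "payoff dA dB dA dB (dA*dA*4) (dB*dB*4) 2 2 (psi dA) (psi dB) (bt v dA dB) M N \<rho>
     = Re (\<Sum>K<D. \<Sum>L<D. (M 0 $$ (K div (dB*dB), L div (dB*dB)) * N 0 $$ (K mod (dB*dB), L mod (dB*dB))) *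
       (\<rho> $$ (zi dA dB L, zi dA dB K) * Kc v dB (oa dA dB L) (oa dA dB K) (ob dB L) (ob dB K)))"
    unfolding payoff_eq[where M=M and N=N and dA=dA and dB=dB, OF Mc Nc dA dB] D_def ..
  also have "\<dots> \<ge> 0"
    by (rule gram_trace[where I="{..<N1}\<times>{..<N2}" and J="{..<N3}" and u=u and z=z]) (use P Q in auto)
  finally show ?thesis .
qed


definition om :: "nat \<Rightarrow> nat \<Rightarrow> complex" where
  "om d x = (if x div d = x mod d then complex_of_real (1 / sqrt (real d)) else 0)"

definition enc :: "nat \<Rightarrow> nat \<Rightarrow> nat \<Rightarrow> nat \<Rightarrow> nat \<Rightarrow> nat \<Rightarrow> nat" where
  "enc dA dB a ao b bo = (a*dA+ao)*(dB*dB) + (b*dB+bo)"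

lemma enc_dec:
  assumes "a < dA" "ao < dA" "b < dB" "bo < dB"
  shows "enc dA dB a ao b bo div (dB*dB) = a*dA+ao" "enc dA dB a ao b bo mod (dB*dB) = b*dB+bo"
    "zi dA dB (enc dA dB a ao b bo) = a*dB+b" "oa dA dB (enc dA dB a ao b bo) = ao" "ob dB (enc dA dB a ao b bo) = bo"
proof -
  have l: "b*dB+bo < dB*dB" using idx_lt[OF assms(3,4)] .
  show 1: "enc dA dB a ao b bo div (dB*dB) = a*dA+ao" unfolding enc_def using l by (simp only: dm)
  show 2: "enc dA dB a ao b bo mod (dB*dB) = b*dB+bo" unfolding enc_def using l by (simp only: dm)
  show "zi dA dB (enc dA dB a ao b bo) = a*dB+b" unfolding zi_def 1 2 using assms by (simp only: dm)
  show "oa dA dB (enc dA dB a ao b bo) = ao" unfolding oa_def 1 using assms by (simp only: dm)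
  show "ob dB (enc dA dB a ao b bo) = bo" unfolding ob_def 2 using assms by (simp only: dm)
qed

lemma split4: fixes F :: "nat \<Rightarrow> 'a::comm_monoid_add"
  shows "(\<Sum>K<dA*dA*(dB*dB). F K) = (\<Sum>a<dA. \<Sum>ao<dA. \<Sum>b<dB. \<Sum>bo<dB. F (enc dA dB a ao b bo))"
  unfolding enc_def by (simp only: split_sum)

lemma om_enc: "a < d \<Longrightarrow> ao < d \<Longrightarrow> om d (a*d+ao) = (if ao = a then complex_of_real (1 / sqrt (real d)) else 0)"
  unfolding om_def by (simp only: dm eq_commute[of a ao])

lemma collapse:
  fixes g :: "nat \<Rightarrow> complex"
  shows "(\<Sum>K<dA*dA*(dB*dB). om dA (K div (dB*dB)) * om dB (K mod (dB*dB)) * g K)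
     = complex_of_real (1 / sqrt (real dA)) * complex_of_real (1 / sqrt (real dB)) * (\<Sum>a<dA. \<Sum>b<dB. g (enc dA dB a a b b))"
proof -
  define c where "c = complex_of_real (1 / sqrt (real dA)) * complex_of_real (1 / sqrt (real dB))"
  have "(\<Sum>K<dA*dA*(dB*dB). om dA (K div (dB*dB)) * om dB (K mod (dB*dB)) * g K)
     = (\<Sum>a<dA. \<Sum>ao<dA. \<Sum>b<dB. \<Sum>bo<dB. (if ao = a then (if bo = b then c * g (enc dA dB a a b b) else 0) else 0))"
    unfolding split4
  proof (intro sum.cong refl)
    fix a ao b bo assume r: "a \<in> {..<dA}" "ao \<in> {..<dA}" "b \<in> {..<dB}" "bo \<in> {..<dB}"
    then have r': "a < dA" "ao < dA" "b < dB" "bo < dB" by auto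
    show "om dA (enc dA dB a ao b bo div (dB*dB)) * om dB (enc dA dB a ao b bo mod (dB*dB)) * g (enc dA dB a ao b bo)
      = (if ao = a then (if bo = b then c * g (enc dA dB a a b b) else 0) else 0)"
      unfolding enc_dec(1,2)[OF r'] om_enc[OF r'(1,2)] om_enc[OF r'(3,4)] c_def by auto
  qed
  also have "\<dots> = (\<Sum>a<dA. \<Sum>b<dB. c * g (enc dA dB a a b b))"
    by (simp add: sum_if_const sum.delta)
  also have "\<dots> = c * (\<Sum>a<dA. \<Sum>b<dB. g (enc dA dB a a b b))" by (simp add: sum_distrib_left)
  finally show ?thesis unfolding c_def .
qed


lemma cnj_om[simp]: "cnj (om d x) = om d x" unfolding om_def by simp

lemma W_side:
  assumes dA: "0 < dA" and dB: "0 < dB"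
  shows "Re (\<Sum>K<dA*dA*(dB*dB). \<Sum>L<dA*dA*(dB*dB).
       (om dA (K div (dB*dB)) * cnj (om dA (L div (dB*dB))) * (om dB (K mod (dB*dB)) * cnj (om dB (L mod (dB*dB))))) *
       (W $$ (zi dA dB L, zi dA dB K) * Kc v dB (oa dA dB L) (oa dA dB K) (ob dB L) (ob dB K)))
     = Re (qf (dA*dB) (\<lambda>i j. W $$ (i,j)) v) / (real dA * real dB)"
proof -
  define c where "c = complex_of_real (1 / sqrt (real dA)) * complex_of_real (1 / sqrt (real dB))"
  define T where "T = (\<lambda>L K. W $$ (zi dA dB L, zi dA dB K) * Kc v dB (oa dA dB L) (oa dA dB K) (ob dB L) (ob dB K))"
  define w where "w = (\<lambda>K. om dA (K div (dB*dB)) * om dB (K mod (dB*dB)))"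
  have "(\<Sum>K<dA*dA*(dB*dB). \<Sum>L<dA*dA*(dB*dB).
       (om dA (K div (dB*dB)) * cnj (om dA (L div (dB*dB))) * (om dB (K mod (dB*dB)) * cnj (om dB (L mod (dB*dB))))) *
       (W $$ (zi dA dB L, zi dA dB K) * Kc v dB (oa dA dB L) (oa dA dB K) (ob dB L) (ob dB K)))
    = (\<Sum>K<dA*dA*(dB*dB). om dA (K div (dB*dB)) * om dB (K mod (dB*dB)) *
         (\<Sum>L<dA*dA*(dB*dB). om dA (L div (dB*dB)) * om dB (L mod (dB*dB)) * T L K))"
    unfolding T_def sum_distrib_left by (intro sum.cong refl) (simp add: mult_ac)
  also have "\<dots> = c * (\<Sum>a<dA. \<Sum>b<dB. (\<Sum>L<dA*dA*(dB*dB). om dA (L div (dB*dB)) * om dB (L mod (dB*dB)) * T L (enc dA dB a a b b)))"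
    unfolding collapse c_def ..
  also have "\<dots> = c * (\<Sum>a<dA. \<Sum>b<dB. c * (\<Sum>a'<dA. \<Sum>b'<dB. T (enc dA dB a' a' b' b') (enc dA dB a a b b)))"
    unfolding collapse c_def ..
  also have "\<dots> = (c * c) * (\<Sum>a<dA. \<Sum>b<dB. \<Sum>a'<dA. \<Sum>b'<dB. T (enc dA dB a' a' b' b') (enc dA dB a a b b))"
    by (simp add: sum_distrib_left mult_ac)
  also have "(\<Sum>a<dA. \<Sum>b<dB. \<Sum>a'<dA. \<Sum>b'<dB. T (enc dA dB a' a' b' b') (enc dA dB a a b b))
     = (\<Sum>a<dA. \<Sum>b<dB. \<Sum>a'<dA. \<Sum>b'<dB. cnj (v (a'*dB+b')) * W $$ (a'*dB+b', a*dB+b) * v (a*dB+b))"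
  proof (intro sum.cong refl)
    fix a b a' b' assume r: "a \<in> {..<dA}" "b \<in> {..<dB}" "a' \<in> {..<dA}" "b' \<in> {..<dB}"
    then have r1: "a < dA" "a < dA" "b < dB" "b < dB" and r2: "a' < dA" "a' < dA" "b' < dB" "b' < dB" by auto
    show "T (enc dA dB a' a' b' b') (enc dA dB a a b b) = cnj (v (a'*dB+b')) * W $$ (a'*dB+b', a*dB+b) * v (a*dB+b)"
      unfolding T_def enc_dec(3,4,5)[OF r1] enc_dec(3,4,5)[OF r2] Kc_def by (simp add: mult_ac)
  qed
  also have "\<dots> = qf (dA*dB) (\<lambda>i j. W $$ (i,j)) v"
    unfolding qf_def by (subst sum.swap) (simp only: split_sum)
  also have "c * c = complex_of_real (1 / (real dA * real dB))"
    unfolding c_def using dA dB by (simp flip: of_real_mult add: real_sqrt_mult[symmetric])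
  finally show ?thesis by simp
qed


lemma ipow: "\<i> ^ r * cnj (\<i> ^ r) = 1"
proof -
  have "\<i> ^ r * cnj (\<i> ^ r) = (\<i> * cnj \<i>) ^ r" by (simp only: power_mult_distrib complex_cnj_power)
  also have "\<dots> = 1" by simp
  finally show ?thesis .
qed

lemma U_norm:
  assumes i: "i < d" and j: "j < d"
  shows "(\<Sum>a<d. U i j r a * cnj (U i j r a)) = 1"
proof (cases "i = j")
  case True
  have "(\<Sum>a<d. U i j r a * cnj (U i j r a)) = (\<Sum>a<d. if a = i then 1 else 0)"
    using True by (intro sum.cong refl) (simp add: U_def alph_def bet_def)
  also have "\<dots> = 1" using sum_if_eq[OF i, of "\<lambda>_. 1::complex"] by simp
  finally show ?thesis .
next
  case False
  have h: "complex_of_real (sqrt 2) * complex_of_real (sqrt 2) = 2" by (simp flip: of_real_mult)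
  have "(\<Sum>a<d. U i j r a * cnj (U i j r a)) = (\<Sum>a<d. (if a = i then 1/2 else 0) + (if a = j then 1/2 else 0))"
  proof (intro sum.cong refl)
    fix a
    have "\<i> ^ r * cnj (\<i> ^ r) / (complex_of_real (sqrt 2) * complex_of_real (sqrt 2)) = 1/2"
      unfolding ipow h by simp
    then show "U i j r a * cnj (U i j r a) = (if a = i then 1/2 else 0) + (if a = j then 1/2 else 0)"
      using False h by (auto simp: U_def alph_def bet_def field_simps)
  qed
  also have "\<dots> = 1" using i j by (simp add: sum.distrib sum.delta)
  finally show ?thesis .
qed

lemma pure_psi:
  assumes s: "s < d*d*4"
  shows "pure_state d (psi d s)"
proof -
  have d: "0 < d" using s by (cases d) auto
  have i: "s div 4 div d < d"
    using s by (metis div_eq_0_iff less_mult_imp_div_less mult.commute zero_less_numeral zero_less_mult_iff d)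
  have j: "s div 4 mod d < d" using d by simp
  define v where "v = vec d (Us d s)"
  have vc: "v \<in> carrier_vec d" unfolding v_def by simp
  have "v \<bullet>c v = (\<Sum>a<d. Us d s a * cnj (Us d s a))"
    unfolding v_def scalar_prod_def by (simp add: atLeast0LessThan)
  also have "\<dots> = 1" unfolding Us_def by (rule U_norm[OF i j])
  finally have n: "v \<bullet>c v = 1" .
  have "psi d s = mat d d (\<lambda>(i, j). v $ i * cnj (v $ j))"
    unfolding psi_def v_def by (rule eq_matI) auto
  then show ?thesis unfolding pure_state_def using vc n by blast
qed


definition Phi :: "nat \<Rightarrow> complex mat" where
  "Phi d = mat (d*d) (d*d) (\<lambda>(x,y). om d x * cnj (om d y))"
definition Meas :: "nat \<Rightarrow> nat \<Rightarrow> complex mat" where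
  "Meas d a = (if a = 0 then Phi d else 1\<^sub>m (d*d) - Phi d)"

lemma om_norm:
  assumes d: "0 < d"
  shows "(\<Sum>x<d*d. cnj (om d x) * om d x) = 1"
proof -
  have "(\<Sum>x<d*d. cnj (om d x) * om d x) = (\<Sum>a<d. \<Sum>ao<d. if ao = a then complex_of_real (1 / real d) else 0)"
    unfolding split_sum
  proof (intro sum.cong refl)
    fix a ao assume "a \<in> {..<d}" "ao \<in> {..<d}"
    then have r: "a < d" "ao < d" by auto
    have "complex_of_real (1 / sqrt (real d)) * complex_of_real (1 / sqrt (real d)) = complex_of_real (1 / real d)"
      using d by (simp flip: of_real_mult)
    then show "cnj (om d (a * d + ao)) * om d (a * d + ao) = (if ao = a then complex_of_real (1 / real d) else 0)"
      unfolding om_enc[OF r] by simp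
  qed
  also have "\<dots> = (\<Sum>a<d. complex_of_real (1 / real d))" by (simp add: sum.delta)
  also have "\<dots> = 1" using d by simp
  finally show ?thesis .
qed

lemma herm_Phi: "hermitian (d*d) (Phi d)"
  unfolding hermitian_def Phi_def by auto

lemma herm_IPhi: "hermitian (d*d) (1\<^sub>m (d*d) - Phi d)"
  unfolding hermitian_def Phi_def by auto

lemma Phi_psd: "psd (d*d) (Phi d)"
proof (rule psd_intro[OF herm_Phi])
  fix x
  define s where "s = (\<Sum>i<d*d. cnj (x i) * om d i)"
  have "qf (d*d) (\<lambda>i j. Phi d $$ (i,j)) x = (\<Sum>i<d*d. \<Sum>j<d*d. cnj (x i) * (om d i * cnj (om d j)) * x j)"
    unfolding qf_def Phi_def by (intro sum.cong refl) simp
  also have "\<dots> = s * cnj s"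
    unfolding s_def cnj_sum sum_product by (intro sum.cong refl) (simp add: mult_ac)
  finally show "Re (qf (d*d) (\<lambda>i j. Phi d $$ (i,j)) x) \<ge> 0" by (simp add: add_nonneg_nonneg)
qed

lemma IPhi_psd:
  assumes d: "0 < d"
  shows "psd (d*d) (1\<^sub>m (d*d) - Phi d)"
proof (rule psd_intro[OF herm_IPhi])
  fix x
  define s where "s = (\<Sum>i<d*d. cnj (x i) * om d i)"
  define y where "y = (\<lambda>i. x i - cnj s * om d i)"
  have cs: "cnj s = (\<Sum>i<d*d. cnj (om d i) * x i)" unfolding s_def cnj_sum by (simp add: mult.commute)
  have "qf (d*d) (\<lambda>i j. (1\<^sub>m (d*d) - Phi d) $$ (i,j)) x
      = (\<Sum>i<d*d. \<Sum>j<d*d. (if j = i then cnj (x i) * x j else 0) - cnj (x i) * (om d i * cnj (om d j)) * x j)"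
    unfolding qf_def Phi_def by (intro sum.cong refl) (auto simp: algebra_simps)
  also have "\<dots> = (\<Sum>i<d*d. cnj (x i) * x i) - s * cnj s"
    unfolding sum_subtractf s_def cnj_sum sum_product
    by (simp add: sum_if_eq mult_ac)
  also have "\<dots> = (\<Sum>i<d*d. cnj (y i) * y i)"
  proof -
    have "(\<Sum>i<d*d. cnj (y i) * y i) = (\<Sum>i<d*d. cnj (x i) * x i) - cnj s * (\<Sum>i<d*d. cnj (x i) * om d i)
        - s * (\<Sum>i<d*d. cnj (om d i) * x i) + s * cnj s * (\<Sum>i<d*d. cnj (om d i) * om d i)"
      unfolding y_def by (simp add: algebra_simps sum.distrib sum_subtractf sum_distrib_left)
    then show ?thesis unfolding om_norm[OF d] cs[symmetric] s_def[symmetric] by (simp add: algebra_simps)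
  qed
  finally show "Re (qf (d*d) (\<lambda>i j. (1\<^sub>m (d*d) - Phi d) $$ (i,j)) x) \<ge> 0"
    by (simp add: Re_sum add_nonneg_nonneg sum_nonneg)
qed

lemma povm_Meas: "0 < d \<Longrightarrow> povm (d*d) 2 (Meas d)"
  unfolding povm_def
proof (intro conjI allI impI)
  fix a assume "0 < d" "a < (2::nat)"
  then show "psd (d*d) (Meas d a)" unfolding Meas_def using Phi_psd IPhi_psd by auto
next
  fix i j assume "i < d*d" "j < d*d"
  then show "(\<Sum>a<2. Meas d a $$ (i,j)) = (if i = j then 1 else 0)"
    unfolding sum2 Meas_def Phi_def by simp
qed


theorem theorem1:
  fixes dA dB :: nat and W :: "complex mat"
  assumes "popt dA dB W" and "\<not> density (dA * dB) W"
  shows "\<exists>dAo dBo nSA nSB nOA nOB psiA psiB beta M N.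
     semiquantum_game dAo dBo nSA nSB psiA psiB \<and>
     povm (dA * dAo) nOA M \<and> povm (dB * dBo) nOB N \<and>
     payoff dA dB dAo dBo nSA nSB nOA nOB psiA psiB beta M N W < 0 \<and>
     (\<forall>\<rho> M' N'. density (dA * dB) \<rho> \<longrightarrow> povm (dA * dAo) nOA M' \<longrightarrow> povm (dB * dBo) nOB N' \<longrightarrow>
        payoff dA dB dAo dBo nSA nSB nOA nOB psiA psiB beta M' N' \<rho> \<ge> 0)"
proof -
  have hW: "hermitian (dA*dB) W" and tW: "mtrace W = 1" using assms(1) unfolding popt_def by auto
  have Wc: "W \<in> carrier_mat (dA*dB) (dA*dB)" using hW unfolding hermitian_def by blast
  have pos: "0 < dA*dB"
  proof (rule ccontr)
    assume "\<not> 0 < dA*dB"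
    then have "dim_row W = 0" using Wc by simp
    then have "mtrace W = 0" unfolding mtrace_def by simp
    then show False using tW by simp
  qed
  then have dA: "0 < dA" and dB: "0 < dB" by auto
  have npsd: "\<not> psd (dA*dB) W" using assms(2) tW unfolding density_def by blast
  obtain v where v: "Re (qf (dA*dB) (\<lambda>i j. W $$ (i,j)) v) < 0"
  proof -
    have "\<not> (\<forall>x. Re (qf (dA*dB) (\<lambda>i j. W $$ (i,j)) x) \<ge> 0)" using npsd psd_intro[OF hW] by blast
    then show ?thesis using that by (meson not_le)
  qed
  define D where "D = dA*dA*(dB*dB)"
  have game: "semiquantum_game dA dB (dA*dA*4) (dB*dB*4) (psi dA) (psi dB)"
    unfolding semiquantum_game_def using pure_psi by blast
  have MA: "povm (dA*dA) 2 (Meas dA)" using povm_Meas[OF dA] .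
  have MB: "povm (dB*dB) 2 (Meas dB)" using povm_Meas[OF dB] .
  have MAc: "Meas dA 0 \<in> carrier_mat (dA*dA) (dA*dA)" unfolding Meas_def Phi_def by simp
  have MBc: "Meas dB 0 \<in> carrier_mat (dB*dB) (dB*dB)" unfolding Meas_def Phi_def by simp
  have "payoff dA dB dA dB (dA*dA*4) (dB*dB*4) 2 2 (psi dA) (psi dB) (bt v dA dB) (Meas dA) (Meas dB) W
     = Re (\<Sum>K<D. \<Sum>L<D.
       (Meas dA 0 $$ (K div (dB*dB), L div (dB*dB)) * Meas dB 0 $$ (K mod (dB*dB), L mod (dB*dB))) *
       (W $$ (zi dA dB L, zi dA dB K) * Kc v dB (oa dA dB L) (oa dA dB K) (ob dB L) (ob dB K)))"
    unfolding payoff_eq[where M="Meas dA" and N="Meas dB" and dA=dA and dB=dB, OF MAc MBc dA dB] D_def ..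
  also have "\<dots> = Re (\<Sum>K<D. \<Sum>L<D.
       (om dA (K div (dB*dB)) * cnj (om dA (L div (dB*dB))) * (om dB (K mod (dB*dB)) * cnj (om dB (L mod (dB*dB))))) *
       (W $$ (zi dA dB L, zi dA dB K) * Kc v dB (oa dA dB L) (oa dA dB K) (ob dB L) (ob dB K)))"
  proof (intro arg_cong[where f=Re] sum.cong refl)
    fix K L assume K: "K \<in> {..<D}" and L: "L \<in> {..<D}"
    have k1: "K div (dB*dB) < dA*dA" "L div (dB*dB) < dA*dA" using K L dB unfolding D_def
      by (simp_all add: less_mult_imp_div_less)
    have k2: "K mod (dB*dB) < dB*dB" "L mod (dB*dB) < dB*dB" using dB by simp_all
    show "(Meas dA 0 $$ (K div (dB*dB), L div (dB*dB)) * Meas dB 0 $$ (K mod (dB*dB), L mod (dB*dB))) *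
       (W $$ (zi dA dB L, zi dA dB K) * Kc v dB (oa dA dB L) (oa dA dB K) (ob dB L) (ob dB K)) =
       (om dA (K div (dB*dB)) * cnj (om dA (L div (dB*dB))) * (om dB (K mod (dB*dB)) * cnj (om dB (L mod (dB*dB))))) *
       (W $$ (zi dA dB L, zi dA dB K) * Kc v dB (oa dA dB L) (oa dA dB K) (ob dB L) (ob dB K))"
      unfolding Meas_def Phi_def using k1 k2 by simp
  qed
  also have "\<dots> = Re (qf (dA*dB) (\<lambda>i j. W $$ (i,j)) v) / (real dA * real dB)"
    unfolding D_def by (rule W_side[OF dA dB])
  also have "\<dots> < 0" using v dA dB by (simp add: divide_neg_pos)
  finally have neg: "payoff dA dB dA dB (dA*dA*4) (dB*dB*4) 2 2 (psi dA) (psi dB) (bt v dA dB) (Meas dA) (Meas dB) W < 0" .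
  have quant: "\<forall>\<rho> M' N'. density (dA * dB) \<rho> \<longrightarrow> povm (dA * dA) 2 M' \<longrightarrow> povm (dB * dB) 2 N' \<longrightarrow>
        payoff dA dB dA dB (dA*dA*4) (dB*dB*4) 2 2 (psi dA) (psi dB) (bt v dA dB) M' N' \<rho> \<ge> 0"
    using rho_side[OF _ _ _ dA dB] by blast
  show ?thesis
    apply (rule exI[of _ dA], rule exI[of _ dB], rule exI[of _ "dA*dA*4"], rule exI[of _ "dB*dB*4"])
    apply (rule exI[of _ 2], rule exI[of _ 2], rule exI[of _ "psi dA"], rule exI[of _ "psi dB"])
    apply (rule exI[of _ "bt v dA dB"], rule exI[of _ "Meas dA"], rule exI[of _ "Meas dB"])
    using game MA MB neg quant by blast
qed


end
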